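(* Let $t$, $k$ and $q$ be integers such that $q \ge 0$, $0 \le t < k$ and $t \equiv k \pmod 2$, and let $s \in [0,t+1]$ be the unique integer satisfying $s \equiv q + \frac{k-t-2}{2} \pmod{t+2}$. Then for any integer $n$ such that \[n \ge \max\left\{k,\ \frac{1}{2(t+2)}k^2 + \frac{q-s}{t+2}k - \frac{t}{2} + s\right\}\] and any function $f:[n]\to \{-1,1\}$ with $|f([n])| \le q$, there is a $k$-block $B \subseteq [n]$ with $|f(B)| \le t$.
   Context: $[n]=\{1,\dots,n\}$. For a function $f$ defined on a set $X$ with integer values and $Y\subseteq X$, $f(Y)=\sum_{y\in Y} f(y)$. A $k$-block is a set of $k$ consecutive integers. *)

theory Defs
  imports Complex_Main "HOL-Number_Theory.Cong"
begin

definition block :: "int \<Rightarrow> int \<Rightarrow> int set" where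
  "block k a = {a..a + k - 1}"

end

theory Submission
  imports Defs
begin

lemma split_int:
  fixes g :: "int \<Rightarrow> int"
  assumes "a \<le> b + 1" "b \<le> c"
  shows "sum g {a..c} = sum g {a..b} + sum g {b+1..c}"
proof -
  have "{a..c} = {a..b} \<union> {b+1..c}" using assms by auto
  moreover have "{a..b} \<inter> {b+1..c} = {}" by auto
  ultimately show ?thesis by (simp add: sum.union_disjoint)
qed

lemma sum_lb:
  fixes g :: "int \<Rightarrow> int"
  assumes "\<forall>i\<in>{a..b}. g i \<in> {-1,1}" "a \<le> b + 1"
  shows "sum g {a..b} \<ge> a - b - 1"
proof -
  have "sum g {a..b} \<ge> sum (\<lambda>_. -1) {a..b}"
  proof (rule sum_mono)
    fix i assume "i \<in> {a..b}"
    then have "g i \<in> {-1,1}" using assms(1) by blast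
    thus "-1 \<le> g i" by auto
  qed
  moreover have "sum (\<lambda>_. -1::int) {a..b} = a - b - 1" using assms(2) by simp
  ultimately show ?thesis by simp
qed

lemma sum_ub:
  fixes g :: "int \<Rightarrow> int"
  assumes "\<forall>i\<in>{a..b}. g i \<in> {-1,1}" "a \<le> b + 1"
  shows "sum g {a..b} \<le> b - a + 1"
proof -
  have "sum g {a..b} \<le> sum (\<lambda>_. 1) {a..b}"
  proof (rule sum_mono)
    fix i assume "i \<in> {a..b}"
    then have "g i \<in> {-1,1}" using assms(1) by blast
    thus "g i \<le> 1" by auto
  qed
  moreover have "sum (\<lambda>_. 1::int) {a..b} = b - a + 1" using assms(2) by simp
  ultimately show ?thesis by simp
qed

lemma parity:
  fixes g :: "int \<Rightarrow> int"
  assumes "\<forall>i\<in>A. g i \<in> {-1,1}" "finite A"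
  shows "2 dvd (sum g A - int (card A))"
proof -
  have "sum g A - int (card A) = sum (\<lambda>i. g i - 1) A" by (simp add: sum_subtractf)
  moreover have "2 dvd sum (\<lambda>i. g i - 1) A" by (rule dvd_sum) (use assms in auto)
  ultimately show ?thesis by simp
qed

lemma step:
  fixes g :: "int \<Rightarrow> int"
  assumes "k \<ge> 1"
  shows "sum g {a+1..a+k} = sum g {a..a+k-1} - g a + g (a+k)"
proof -
  have "sum g {a..a+k} = sum g {a..a} + sum g {a+1..a+k}"
    using assms by (intro split_int) auto
  moreover have "sum g {a..a+k} = sum g {a..a+k-1} + sum g {a+k-1+1..a+k}"
    using assms by (intro split_int) auto
  ultimately show ?thesis by simp
qed

lemma cont:
  fixes g :: "int \<Rightarrow> int"
  assumes k: "k \<ge> 1" and c: "c \<ge> 2"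
    and g: "\<forall>i\<in>{1..n}. g i \<in> {-1,1}"
    and dich: "\<forall>a. 1 \<le> a \<longrightarrow> a+k-1 \<le> n \<longrightarrow> (sum g {a..a+k-1} \<ge> c \<or> sum g {a..a+k-1} \<le> -c)"
    and s1: "sum g {1..1+k-1} \<ge> c"
  shows "\<forall>a. 1 \<le> a \<longrightarrow> a+k-1 \<le> n \<longrightarrow> sum g {a..a+k-1} \<ge> c"
proof -
  have H: "1 + int j + k - 1 \<le> n \<longrightarrow> sum g {1 + int j..1 + int j+k-1} \<ge> c" for j :: nat
  proof (induction j)
    case 0 then show ?case using s1 by simp
  next
    case (Suc j)
    define a where "a = 1 + int j"
    show ?case
    proof
      assume le: "1 + int (Suc j) + k - 1 \<le> n"
      hence le': "a + k \<le> n" by (simp add: a_def)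
      have "sum g {a..a+k-1} \<ge> c" using Suc le' by (simp add: a_def)
      moreover have "sum g {a+1..a+k} = sum g {a..a+k-1} - g a + g (a+k)" using k by (rule step)
      moreover have "a \<in> {1..n}" "a+k \<in> {1..n}" using le' k by (auto simp: a_def)
      hence "g a \<in> {-1,1}" "g (a+k) \<in> {-1,1}" using g by blast+
      hence "g a \<le> 1" "g (a+k) \<ge> -1" by auto
      ultimately have "sum g {a+1..a+k} \<ge> c - 2" by linarith
      moreover have "sum g {a+1..a+1+k-1} \<ge> c \<or> sum g {a+1..a+1+k-1} \<le> -c"
        using dich[rule_format, of "a+1"] le' unfolding a_def by simp
      ultimately have "sum g {a+1..a+1+k-1} \<ge> c" using c by auto
      thus "sum g {1 + int (Suc j)..1 + int (Suc j)+k-1} \<ge> c" by (simp add: a_def add.commute)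
    qed
  qed
  show ?thesis
  proof (intro allI impI)
    fix a assume "1 \<le> a" "a + k - 1 \<le> n"
    then show "sum g {a..a+k-1} \<ge> c" using H[of "nat (a-1)"] by simp
  qed
qed

lemma prefix:
  fixes g :: "int \<Rightarrow> int"
  assumes k: "k \<ge> 1"
    and bl: "\<forall>a. 1 \<le> a \<longrightarrow> a+k-1 \<le> n \<longrightarrow> sum g {a..a+k-1} \<ge> c"
  shows "int m * k \<le> n \<longrightarrow> sum g {1..int m*k} \<ge> int m * c"
proof (induction m)
  case 0 then show ?case by simp
next
  case (Suc m)
  show ?case
  proof
    assume le: "int (Suc m) * k \<le> n"
    have e: "int (Suc m) * k = int m * k + k" by (simp add: algebra_simps)
    have nn: "int m * k \<ge> 0" using k by simp
    have "sum g {1..int m * k + k} = sum g {1..int m * k} + sum g {int m * k + 1..int m * k + k}"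
      using nn k by (intro split_int) auto
    moreover have "sum g {1..int m*k} \<ge> int m * c" using Suc le e k by simp
    moreover have "sum g {int m * k + 1..int m * k + 1 + k - 1} \<ge> c"
      using bl[rule_format, of "int m * k + 1"] le e nn by simp
    moreover have "int m * k + 1 + k - 1 = int m * k + k" by simp
    ultimately show "sum g {1..int (Suc m)*k} \<ge> int (Suc m) * c"
      by (simp add: e algebra_simps)
  qed
qed

lemma lower:
  fixes g :: "int \<Rightarrow> int"
  assumes k: "k \<ge> 1" and nk: "n \<ge> k"
    and g: "\<forall>i\<in>{1..n}. g i \<in> {-1,1}"
    and bl: "\<forall>a. 1 \<le> a \<longrightarrow> a+k-1 \<le> n \<longrightarrow> sum g {a..a+k-1} \<ge> c"
  shows "sum g {1..n} \<ge> (n div k) * c - n mod k"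
    and "sum g {1..n} \<ge> (n div k) * c + n mod k - (k - c)"
proof -
  define m where "m = n div k"
  define r where "r = n mod k"
  have n: "n = m * k + r" by (simp add: m_def r_def)
  have r: "0 \<le> r" "r < k" using k by (auto simp: r_def)
  have m0: "m \<ge> 0" using k nk by (simp add: m_def pos_imp_zdiv_nonneg_iff)
  have mk: "m * k \<ge> 0" using m0 k by simp
  have P: "sum g {1..m*k} \<ge> m * c"
    using prefix[OF k bl, of "nat m"] m0 n r by simp
  have S: "sum g {1..n} = sum g {1..m*k} + sum g {m*k+1..n}"
    using mk n r by (intro split_int) auto
  have g2: "\<forall>i\<in>{m*k+1..n}. g i \<in> {-1,1}" using g mk by auto
  have L1: "sum g {m*k+1..n} \<ge> -r" using sum_lb[OF g2] n r by simp
  have S2: "sum g {n-k+1..n} = sum g {n-k+1..m*k} + sum g {m*k+1..n}"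
    using n r by (intro split_int) auto
  have g3: "\<forall>i\<in>{n-k+1..m*k}. g i \<in> {-1,1}" using g nk n r by auto
  have U: "sum g {n-k+1..m*k} \<le> k - r" using sum_ub[OF g3] n r by simp
  have B: "sum g {n-k+1..n-k+1+k-1} \<ge> c" using bl[rule_format, of "n-k+1"] nk by simp
  have L2: "sum g {m*k+1..n} \<ge> c - (k - r)" using S2 U B by simp
  show "sum g {1..n} \<ge> (n div k) * c - n mod k"
    using S P L1 by (simp add: m_def r_def)
  show "sum g {1..n} \<ge> (n div k) * c + n mod k - (k - c)"
    using S P L2 by (simp add: m_def r_def)
qed

lemma arith:
  fixes c d q s M m r k n X :: int
  assumes "c \<ge> 2" "k = 2*d + c" "d \<ge> 0" "q + d - s = c*M" "0 \<le> s" "s \<le> c - 1"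
    "n = m*k + r" "0 \<le> r" "r < k" "n \<ge> k*M + d + 1 + s"
    "X \<ge> m*c - r" "X \<ge> m*c + r - (k - c)" "M \<ge> 0"
  shows "X \<ge> q + 1"
proof (cases "m \<ge> M + 1")
  case True
  hence "m * c \<ge> (M+1) * c" using assms(1) by (intro mult_right_mono) auto
  thus ?thesis using assms by (simp add: algebra_simps)
next
  case False
  have "m \<ge> M"
  proof (rule ccontr)
    assume "\<not> m \<ge> M"
    hence "(m+1) * k \<le> M * k" using assms(1-3) by (intro mult_right_mono) auto
    thus False using assms by (simp add: algebra_simps)
  qed
  hence "m = M" using False by simp
  thus ?thesis using assms by (simp add: algebra_simps)
qed


lemma real_id:
  fixes C D M S :: real
  assumes "C > 0"
  shows "(2*D+C)^2/(2*C) + (C*M - D)/C*(2*D+C) - (C-2)/2 + S = (2*D+C)*M + D + 1 + S"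
  using assms by (simp add: field_simps power2_eq_square)

lemma key:
  fixes g :: "int \<Rightarrow> int" and c d q s M k n :: int
  assumes "c \<ge> 2" "k = 2*d + c" "d \<ge> 0" "q + d - s = c*M" "0 \<le> s" "s \<le> c - 1"
    "n \<ge> k*M + d + 1 + s" "M \<ge> 0" "n \<ge> k"
    and g: "\<forall>i\<in>{1..n}. g i \<in> {-1,1}"
    and bl: "\<forall>a. 1 \<le> a \<longrightarrow> a+k-1 \<le> n \<longrightarrow> sum g {a..a+k-1} \<ge> c"
  shows "sum g {1..n} \<ge> q + 1"
proof -
  have k: "k \<ge> 1" using assms by simp
  have r: "0 \<le> n mod k" "n mod k < k" using k by auto
  show ?thesis
    using arith[OF assms(1-6), of n "n div k" "n mod k", OF _ r assms(7) lower(1)[OF k assms(9) g bl]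
        lower(2)[OF k assms(9) g bl] assms(8)] by simp
qed

theorem theorem2p2:
  fixes t k q s n :: int and f :: "int \<Rightarrow> int"
  assumes "q \<ge> 0" and "0 \<le> t" and "t < k" and "[t = k] (mod 2)"
    and "0 \<le> s" and "s \<le> t + 1"
    and "[s = q + (k - t - 2) div 2] (mod (t + 2))"
    and "n \<ge> k"
    and "real_of_int n \<ge> (real_of_int k)^2 / (2 * real_of_int (t + 2))
          + real_of_int (q - s) / real_of_int (t + 2) * real_of_int k
          - real_of_int t / 2 + real_of_int s"
    and "\<forall>i\<in>{1..n}. f i \<in> {-1, 1}"
    and "\<bar>sum f {1..n}\<bar> \<le> q"
  shows "\<exists>a. block k a \<subseteq> {1..n} \<and> \<bar>sum f (block k a)\<bar> \<le> t"
proof (rule ccontr)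
  assume neg: "\<not> ?thesis"
  define c where "c = t + 2"
  have "2 dvd (k - t)" using assms(4) by (simp add: cong_iff_dvd_diff dvd_diff_commute)
  then obtain e where e: "k - t = 2 * e" by blast
  define d where "d = e - 1"
  have d0: "d \<ge> 0" using e assms(3) by (simp add: d_def)
  have kd: "k = 2*d + c" using e by (simp add: d_def c_def)
  have dd: "(k - t - 2) div 2 = d" using e by (simp add: d_def)
  have "c dvd (q + d - s)" using assms(7) dd by (simp add: cong_iff_dvd_diff dvd_diff_commute c_def)
  then obtain M where M: "q + d - s = c * M" by blast
  have c2: "c \<ge> 2" using assms(2) by (simp add: c_def)
  have M0: "M \<ge> 0"
  proof (rule ccontr)
    assume "\<not> M \<ge> 0"
    hence "c * M \<le> c * (-1)" using c2 by (intro mult_left_mono) auto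
    thus False using M assms(1,6) d0 by (simp add: c_def)
  qed
  have q: "q = c*M - d + s" using M by simp
  have cr: "real_of_int c > 0" using c2 by simp
  have "(real_of_int k)^2 / (2 * real_of_int (t + 2))
          + real_of_int (q - s) / real_of_int (t + 2) * real_of_int k
          - real_of_int t / 2 + real_of_int s = real_of_int (k*M + d + 1 + s)"
    using real_id[OF cr, of "real_of_int d" "real_of_int M" "real_of_int s"]
    unfolding kd q by (simp add: c_def)
  hence nb: "n \<ge> k*M + d + 1 + s" using assms(9) by linarith
  have k1: "k \<ge> 1" using kd c2 d0 by simp
  have sl: "s \<le> c - 1" using assms(6) by (simp add: c_def)
  have dich: "sum f {a..a+k-1} \<ge> c \<or> sum f {a..a+k-1} \<le> -c" if a: "1 \<le> a" "a+k-1 \<le> n" for a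
  proof -
    have sub: "block k a \<subseteq> {1..n}" using a by (auto simp: block_def)
    hence big: "\<bar>sum f {a..a+k-1}\<bar> > t" using neg by (auto simp: block_def)
    have "\<forall>i\<in>{a..a+k-1}. f i \<in> {-1,1}" using assms(10) a by auto
    from parity[OF this] have "2 dvd (sum f {a..a+k-1} - k)" using k1 by simp
    with e big show ?thesis unfolding c_def by presburger
  qed
  have dichf: "\<forall>a. 1 \<le> a \<longrightarrow> a+k-1 \<le> n \<longrightarrow> (sum f {a..a+k-1} \<ge> c \<or> sum f {a..a+k-1} \<le> -c)"
    using dich by blast
  have kn: "1 + k - 1 \<le> n" using assms(8) by simp
  show False
  proof (cases "sum f {1..1+k-1} \<ge> c")
    case True
    have bl: "\<forall>a. 1 \<le> a \<longrightarrow> a+k-1 \<le> n \<longrightarrow> sum f {a..a+k-1} \<ge> c"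
      using cont[OF k1 c2 assms(10) dichf True] .
    have "sum f {1..n} \<ge> q + 1"
      using key[OF c2 kd d0 M assms(5) sl nb M0 assms(8) assms(10) bl] .
    thus False using assms(11) by simp
  next
    case False
    define g where "g = (\<lambda>i. - f i)"
    have sg: "sum g A = - sum f A" for A by (simp add: g_def sum_negf)
    have gpm: "\<forall>i\<in>{1..n}. g i \<in> {-1,1}" using assms(10) by (auto simp: g_def)
    have dichg: "\<forall>a. 1 \<le> a \<longrightarrow> a+k-1 \<le> n \<longrightarrow> (sum g {a..a+k-1} \<ge> c \<or> sum g {a..a+k-1} \<le> -c)"
      using dichf unfolding sg by auto
    have g1: "sum g {1..1+k-1} \<ge> c" using False dichf kn unfolding sg by auto
    have bl: "\<forall>a. 1 \<le> a \<longrightarrow> a+k-1 \<le> n \<longrightarrow> sum g {a..a+k-1} \<ge> c"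
      using cont[OF k1 c2 gpm dichg g1] .
    have "sum g {1..n} \<ge> q + 1"
      using key[OF c2 kd d0 M assms(5) sl nb M0 assms(8) gpm bl] .
    thus False using assms(11) unfolding sg by simp
  qed
qed

end
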